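(* Let $n$ and $k$ be positive integers with $k\le n$, let $m=\binom{n}{k}$, let $\nu$ be a vector norm on $\mathbb{C}^n$, and let $\mu$ be an absolute operator norm on $\mathbb{C}^{m\times m}$. Then for every $A\in\mathbb{C}^{n\times n}$, $$\mu(C_k(A)) \le \theta_k(\mu,\nu)\max_{\alpha\subseteq\{1,\ldots,n\},\ |\alpha|=k}\ \prod_{i\in\alpha}\nu(\mathrm{col}_i(A)).$$
   Context: For $A\in\mathbb{C}^{n\times n}$ and $\alpha,\beta\subseteq\{1,\ldots,n\}$, $A(\alpha|\beta)$ is the submatrix with rows indexed by $\alpha$ and columns indexed by $\beta$. The $k$th compound $C_k(A)$ is the $\binom{n}{k}\times\binom{n}{k}$ matrix with entries $\det A(\alpha|\beta)$, $|\alpha|=|\beta|=k$, indexed by $k$-subsets in lexicographic order. $\mathrm{col}_i(B)$ denotes the $i$th column of $B$. For a vector norm $\nu$ on $\mathbb{C}^n$ and a norm $\mu$ on $\mathbb{C}^{m\times m}$, $m=\binom nk$, define $\theta_k(\mu,\nu)=\max\{\mu(C_k(B)): B\in\mathbb{C}^{n\times n},\ \nu(\mathrm{col}_i(B))=1,\ i=1,\ldots,n\}$. An absolute operator norm is a matrix norm induced (as an operator norm) by an absolute vector norm (one with $\|x\|=\||x|\|$). *)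

theory Defs
  imports "Jordan_Normal_Form.Determinant" "Jordan_Normal_Form.DL_Submatrix"
          "HOL-Library.List_Lexorder"
begin

text \<open>Indices are 0-based: {0..<n} plays the role of {1,...,n}.\<close>

definition is_vec_norm :: "nat \<Rightarrow> (complex vec \<Rightarrow> real) \<Rightarrow> bool" where
  "is_vec_norm n \<nu> \<longleftrightarrow>
     (\<forall>x \<in> carrier_vec n. 0 \<le> \<nu> x \<and> (\<nu> x = 0 \<longleftrightarrow> x = 0\<^sub>v n)) \<and>
     (\<forall>x \<in> carrier_vec n. \<forall>c. \<nu> (c \<cdot>\<^sub>v x) = cmod c * \<nu> x) \<and>
     (\<forall>x \<in> carrier_vec n. \<forall>y \<in> carrier_vec n. \<nu> (x + y) \<le> \<nu> x + \<nu> y)"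

definition vec_abs :: "complex vec \<Rightarrow> complex vec" where
  "vec_abs x = map_vec (\<lambda>z. complex_of_real (cmod z)) x"

definition is_absolute_vec_norm :: "nat \<Rightarrow> (complex vec \<Rightarrow> real) \<Rightarrow> bool" where
  "is_absolute_vec_norm n \<eta> \<longleftrightarrow> is_vec_norm n \<eta> \<and>
     (\<forall>x \<in> carrier_vec n. \<eta> x = \<eta> (vec_abs x))"

definition induced_norm :: "nat \<Rightarrow> (complex vec \<Rightarrow> real) \<Rightarrow> complex mat \<Rightarrow> real" where
  "induced_norm m \<eta> M = Sup {\<eta> (M *\<^sub>v x) | x. x \<in> carrier_vec m \<and> \<eta> x = 1}"

definition is_absolute_operator_norm :: "nat \<Rightarrow> (complex mat \<Rightarrow> real) \<Rightarrow> bool" where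
  "is_absolute_operator_norm m \<mu> \<longleftrightarrow>
     (\<exists>\<eta>. is_absolute_vec_norm m \<eta> \<and>
          (\<forall>M \<in> carrier_mat m m. \<mu> M = induced_norm m \<eta> M))"

text \<open>The k-subsets of {0..<n}, listed in lexicographic order (comparing the
  increasingly sorted element lists lexicographically).\<close>
definition ksubsets :: "nat \<Rightarrow> nat \<Rightarrow> nat set list" where
  "ksubsets n k = map set (sorted_list_of_set
      (sorted_list_of_set ` {S. S \<subseteq> {..<n} \<and> card S = k}))"

definition compound :: "nat \<Rightarrow> complex mat \<Rightarrow> complex mat" where
  "compound k A = (let n = dim_row A; m = n choose k; L = ksubsets n k in
     mat m m (\<lambda>(i, j). det (submatrix A (L ! i) (L ! j))))"

text \<open>theta_k(mu, nu): maximum of mu(C_k(B)) over n x n matrices B whose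
  columns all have nu-norm 1 (the maximum exists by compactness; Sup).\<close>
definition theta :: "nat \<Rightarrow> nat \<Rightarrow> (complex mat \<Rightarrow> real) \<Rightarrow> (complex vec \<Rightarrow> real) \<Rightarrow> real" where
  "theta n k \<mu> \<nu> = Sup {\<mu> (compound k B) | B. B \<in> carrier_mat n n \<and>
                                               (\<forall>i < n. \<nu> (col B i) = 1)}"

end

theory Submission
  imports Defs "HOL-Analysis.Function_Topology" "HOL-Analysis.Elementary_Metric_Spaces"
begin

lemma compact_cball_complex: "compact (cball (0::complex) 1)"
proof -
  define F where "F p = complex_of_real (fst p) + \<i> * complex_of_real (snd p)" for p :: "real \<times> real"
  have "cball (0::complex) 1 \<subseteq> F ` cball (0::real\<times>real) 1"
  proof
    fix z :: complex assume "z \<in> cball 0 1"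
    hence "(Re z, Im z) \<in> cball (0::real\<times>real) 1"
      unfolding mem_cball dist_0_norm norm_Pair cmod_def by simp
    moreover have "z = F (Re z, Im z)" unfolding F_def by (simp add: complex_eq_iff)
    ultimately show "z \<in> F ` cball (0::real\<times>real) 1" by blast
  qed
  moreover have "F ` cball (0::real\<times>real) 1 \<subseteq> cball (0::complex) 1"
  proof
    fix z assume "z \<in> F ` cball (0::real\<times>real) 1"
    then obtain a b where "z = F (a, b)" "(a,b) \<in> cball (0::real\<times>real) 1" by auto
    thus "z \<in> cball 0 1" unfolding F_def mem_cball dist_0_norm norm_Pair cmod_def by simp
  qed
  moreover have "compact (F ` cball (0::real\<times>real) 1)"
    unfolding F_def by (intro compact_continuous_image compact_cball continuous_intros)
  ultimately show ?thesis by (metis subset_antisym)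
qed

lemma vn_nonneg: "is_vec_norm n \<nu> \<Longrightarrow> x \<in> carrier_vec n \<Longrightarrow> 0 \<le> \<nu> x"
  unfolding is_vec_norm_def by blast
lemma vn_zero_iff: "is_vec_norm n \<nu> \<Longrightarrow> x \<in> carrier_vec n \<Longrightarrow> \<nu> x = 0 \<longleftrightarrow> x = 0\<^sub>v n"
  unfolding is_vec_norm_def by blast
lemma vn_zero: "is_vec_norm n \<nu> \<Longrightarrow> \<nu> (0\<^sub>v n) = 0"
  unfolding is_vec_norm_def by auto
lemma vn_smult: "is_vec_norm n \<nu> \<Longrightarrow> x \<in> carrier_vec n \<Longrightarrow> \<nu> (c \<cdot>\<^sub>v x) = cmod c * \<nu> x"
  unfolding is_vec_norm_def by blast
lemma vn_tri: "is_vec_norm n \<nu> \<Longrightarrow> x \<in> carrier_vec n \<Longrightarrow> y \<in> carrier_vec n \<Longrightarrow> \<nu> (x + y) \<le> \<nu> x + \<nu> y"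
  unfolding is_vec_norm_def by blast

lemma vn_diff: assumes "is_vec_norm n \<nu>" "x \<in> carrier_vec n" "y \<in> carrier_vec n"
  shows "\<bar>\<nu> x - \<nu> y\<bar> \<le> \<nu> (x - y)"
proof -
  have "x = (x - y) + y" using assms by auto
  hence 1: "\<nu> x \<le> \<nu> (x - y) + \<nu> y" using vn_tri[OF assms(1), of "x - y" y] assms by simp
  have "y = (y - x) + x" using assms by auto
  hence 2: "\<nu> y \<le> \<nu> (y - x) + \<nu> x" using vn_tri[OF assms(1), of "y - x" x] assms by simp
  have "y - x = (-1) \<cdot>\<^sub>v (x - y)" using assms by auto
  hence "\<nu> (y - x) = \<nu> (x - y)" using vn_smult[OF assms(1), of "x - y" "-1"] assms by simp
  thus ?thesis using 1 2 by linarith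
qed

lemma vn_upper: assumes "is_vec_norm n \<nu>" "x \<in> carrier_vec n"
  shows "\<nu> x \<le> (\<Sum>i<n. cmod (x $ i) * \<nu> (unit_vec n i))"
proof -
  have "\<nu> (vec n (\<lambda>i. if i < m then x $ i else 0)) \<le> (\<Sum>i<m. cmod (x $ i) * \<nu> (unit_vec n i))"
    if "m \<le> n" for m
    using that
  proof (induction m)
    case 0
    have "vec n (\<lambda>i. if i < 0 then x $ i else 0) = 0\<^sub>v n" by auto
    then show ?case using vn_zero[OF assms(1)] by simp
  next
    case (Suc m)
    have e: "vec n (\<lambda>i. if i < Suc m then x $ i else 0) =
          vec n (\<lambda>i. if i < m then x $ i else 0) + (x $ m) \<cdot>\<^sub>v unit_vec n m"
      using Suc.prems by (intro eq_vecI) (auto simp: unit_vec_def less_Suc_eq)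
    have "\<nu> (vec n (\<lambda>i. if i < Suc m then x $ i else 0)) \<le>
          \<nu> (vec n (\<lambda>i. if i < m then x $ i else 0)) + \<nu> ((x $ m) \<cdot>\<^sub>v unit_vec n m)"
      unfolding e by (rule vn_tri[OF assms(1)]) auto
    also have "\<nu> ((x $ m) \<cdot>\<^sub>v unit_vec n m) = cmod (x $ m) * \<nu> (unit_vec n m)"
      by (rule vn_smult[OF assms(1)]) auto
    finally show ?case using Suc by simp
  qed
  moreover have "vec n (\<lambda>i. if i < n then x $ i else 0) = x"
    using assms(2) by (intro eq_vecI) auto
  ultimately show ?thesis by (metis order_refl)
qed

lemma vn_lower: assumes "is_vec_norm n \<nu>"
  shows "\<exists>c>0. \<forall>x \<in> carrier_vec n. \<forall>i<n. cmod (x $ i) \<le> c * \<nu> x"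
proof (cases "n = 0")
  case True thus ?thesis by (intro exI[of _ 1]) auto
next
  case False
  define S :: "(nat \<Rightarrow> complex) set" where
    "S = (PiE UNIV (\<lambda>i. if i < n then cball 0 1 else {undefined})) \<inter> (\<Union>i<n. {f. cmod (f i) = 1})"
  define g where "g f = \<nu> (vec n f)" for f :: "nat \<Rightarrow> complex"
  have c1: "compact (PiE UNIV (\<lambda>i. if i < n then cball (0::complex) 1 else {undefined}))"
  proof -
    have "compactin (product_topology (\<lambda>i. euclidean) UNIV)
             (PiE UNIV (\<lambda>i. if i < n then cball (0::complex) 1 else {undefined}))"
      unfolding compactin_PiE using compact_cball_complex by auto
    thus ?thesis unfolding euclidean_product_topology by simp
  qed
  have c2: "closed (\<Union>i<n. {f::nat \<Rightarrow> complex. cmod (f i) = 1})"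
  proof (intro closed_UN ballI)
    fix i
    show "closed {f::nat \<Rightarrow> complex. cmod (f i) = 1}"
      by (intro closed_Collect_eq continuous_on_norm continuous_on_product_coordinates continuous_on_const)
  qed simp
  have cS: "compact S" unfolding S_def using c1 c2 by (rule compact_Int_closed)
  have neS: "(\<lambda>i. if i < n then 1 else undefined) \<in> S" using False unfolding S_def by auto
  have cont: "continuous_on UNIV g"
  proof -
    have "(g \<longlongrightarrow> g h) (at h)" for h
    proof -
      define R where "R f = (\<Sum>i<n. cmod (f i - h i) * \<nu> (unit_vec n i))" for f :: "nat \<Rightarrow> complex"
      have Rc: "continuous_on UNIV R" unfolding R_def
        by (intro continuous_intros continuous_on_product_coordinates)
      have "(R \<longlongrightarrow> R h) (at h)" using Rc by (simp add: continuous_on_def)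
      hence R0: "(R \<longlongrightarrow> 0) (at h)" by (simp add: R_def)
      have b: "\<bar>g f - g h\<bar> \<le> R f" for f
      proof -
        have "\<bar>g f - g h\<bar> \<le> \<nu> (vec n f - vec n h)" unfolding g_def by (rule vn_diff[OF assms]) auto
        also have "\<dots> \<le> R f" unfolding R_def
          by (rule order_trans[OF vn_upper[OF assms]]) auto
        finally show ?thesis .
      qed
      have t1: "((\<lambda>f. g h - R f) \<longlongrightarrow> g h) (at h)" using tendsto_diff[OF tendsto_const R0] by simp
      have t2: "((\<lambda>f. g h + R f) \<longlongrightarrow> g h) (at h)" using tendsto_add[OF tendsto_const R0] by simp
      have e1: "\<forall>\<^sub>F f in at h. g h - R f \<le> g f" using b by (intro always_eventually allI) (smt (verit))
      have e2: "\<forall>\<^sub>F f in at h. g f \<le> g h + R f" using b by (intro always_eventually allI) (smt (verit))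
      show ?thesis by (rule tendsto_sandwich[OF e1 e2 t1 t2])
    qed
    thus ?thesis by (simp add: continuous_on_def)
  qed
  obtain f0 where f0: "f0 \<in> S" "\<And>f. f \<in> S \<Longrightarrow> g f0 \<le> g f"
    using continuous_attains_inf[OF cS _ continuous_on_subset[OF cont]] neS by blast
  have "vec n f0 \<noteq> 0\<^sub>v n"
  proof
    assume "vec n f0 = 0\<^sub>v n"
    moreover obtain i where "i < n" "cmod (f0 i) = 1" using f0(1) unfolding S_def by auto
    ultimately show False by (metis index_vec index_zero_vec(1) norm_zero zero_neq_one)
  qed
  hence "g f0 \<noteq> 0" unfolding g_def using vn_zero_iff[OF assms, of "vec n f0"] by simp
  moreover have "g f0 \<ge> 0" unfolding g_def by (rule vn_nonneg[OF assms]) simp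
  ultimately have gpos: "g f0 > 0" by simp
  show ?thesis
  proof (intro exI[of _ "1 / g f0"] conjI ballI allI impI)
    show "0 < 1 / g f0" using gpos by simp
    fix x :: "complex vec" and i assume x: "x \<in> carrier_vec n" and i: "i < n"
    show "cmod (x $ i) \<le> 1 / g f0 * \<nu> x"
    proof (cases "x = 0\<^sub>v n")
      case True thus ?thesis using i vn_zero[OF assms] by simp
    next
      case xn: False
      define M where "M = Max ((\<lambda>j. cmod (x $ j)) ` {..<n})"
      have Mi: "cmod (x $ j) \<le> M" if "j < n" for j unfolding M_def using that by auto
      have "M \<in> (\<lambda>j. cmod (x $ j)) ` {..<n}" unfolding M_def using False by (intro Max_in) auto
      then obtain j where j: "j < n" "M = cmod (x $ j)" by auto
      have Mpos: "M > 0"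
      proof (rule ccontr)
        assume "\<not> M > 0"
        have "x $ j = 0" if "j < n" for j
        proof -
          have "cmod (x $ j) \<le> 0" using Mi[OF that] \<open>\<not> M > 0\<close> by linarith
          thus ?thesis by simp
        qed
        hence "\<forall>j<n. x $ j = 0" by blast
        hence "x = 0\<^sub>v n" using x by (intro eq_vecI) auto
        thus False using xn by simp
      qed
      define f where "f j = (if j < n then x $ j / M else undefined)" for j
      have fb: "cmod (f i) \<le> 1" if "i < n" for i
      proof -
        have "cmod (f i) = cmod (x $ i) / M" using that Mpos unfolding f_def by (simp add: norm_divide)
        thus ?thesis using Mi[OF that] Mpos by simp
      qed
      have f1: "cmod (f j) = 1"
      proof -
        have "cmod (f j) = cmod (x $ j) / M" using j(1) Mpos unfolding f_def by (simp add: norm_divide)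
        thus ?thesis using j(2) Mpos by simp
      qed
      have fP: "f \<in> PiE UNIV (\<lambda>i. if i < n then cball (0::complex) 1 else {undefined})"
        using fb unfolding PiE_def Pi_def by (auto simp: f_def)
      have fS: "f \<in> S" unfolding S_def using fP f1 j(1) by blast
      have "vec n f = complex_of_real (1 / M) \<cdot>\<^sub>v x"
      proof (rule eq_vecI)
        fix i assume "i < dim_vec (complex_of_real (1 / M) \<cdot>\<^sub>v x)"
        hence i: "i < n" using x by simp
        show "vec n f $ i = (complex_of_real (1 / M) \<cdot>\<^sub>v x) $ i"
          using i x unfolding f_def by (simp add: divide_inverse mult.commute)
      qed (use x in simp)
      hence "g f = (1 / M) * \<nu> x" unfolding g_def using vn_smult[OF assms x] Mpos by (simp add: norm_divide)
      hence "g f0 \<le> \<nu> x / M" using f0(2)[OF fS] by simp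
      hence "M \<le> \<nu> x / g f0" using Mpos gpos by (simp add: field_simps)
      thus ?thesis using Mi[OF i] by simp
    qed
  qed
qed

lemma avn_vn: "is_absolute_vec_norm n \<eta> \<Longrightarrow> is_vec_norm n \<eta>"
  unfolding is_absolute_vec_norm_def by blast
lemma avn_abs: "is_absolute_vec_norm n \<eta> \<Longrightarrow> x \<in> carrier_vec n \<Longrightarrow> \<eta> x = \<eta> (vec_abs x)"
  unfolding is_absolute_vec_norm_def by blast

lemma avn_scale1:
  assumes a: "is_absolute_vec_norm m \<eta>" and z: "z \<in> carrier_vec m" and j: "j < m"
    and t: "0 \<le> t" "t \<le> 1"
  shows "\<eta> (vec m (\<lambda>i. if i = j then complex_of_real t * z $ i else z $ i)) \<le> \<eta> z"
proof -
  have vn: "is_vec_norm m \<eta>" using a by (rule avn_vn)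
  define w where "w = vec m (\<lambda>i. if i = j then - z $ i else z $ i)"
  have w: "w \<in> carrier_vec m" unfolding w_def by simp
  have "vec_abs w = vec_abs z" unfolding w_def vec_abs_def using z by (intro eq_vecI) auto
  hence ew: "\<eta> w = \<eta> z" using avn_abs[OF a w] avn_abs[OF a z] by simp
  define c1 where "c1 = complex_of_real ((1 + t) / 2)"
  define c2 where "c2 = complex_of_real ((1 - t) / 2)"
  have e: "vec m (\<lambda>i. if i = j then complex_of_real t * z $ i else z $ i) = c1 \<cdot>\<^sub>v z + c2 \<cdot>\<^sub>v w"
  proof (rule eq_vecI)
    fix i assume "i < dim_vec (c1 \<cdot>\<^sub>v z + c2 \<cdot>\<^sub>v w)"
    hence i: "i < m" using w by simp
    have s1: "c1 + c2 = 1" unfolding c1_def c2_def by (simp add: field_simps)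
    have s2: "c1 - c2 = complex_of_real t" unfolding c1_def c2_def by (simp add: field_simps)
    show "vec m (\<lambda>i. if i = j then complex_of_real t * z $ i else z $ i) $ i = (c1 \<cdot>\<^sub>v z + c2 \<cdot>\<^sub>v w) $ i"
    proof (cases "i = j")
      case True
      have "(c1 \<cdot>\<^sub>v z + c2 \<cdot>\<^sub>v w) $ i = c1 * z $ j + c2 * (- z $ j)" using i z w True unfolding w_def by simp
      also have "\<dots> = (c1 - c2) * z $ j" by (simp add: algebra_simps)
      finally show ?thesis using i True s2 by simp
    next
      case False
      have "(c1 \<cdot>\<^sub>v z + c2 \<cdot>\<^sub>v w) $ i = c1 * z $ i + c2 * z $ i" using i z w False unfolding w_def by simp
      also have "\<dots> = (c1 + c2) * z $ i" by (simp add: algebra_simps)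
      finally show ?thesis using i False s1 by simp
    qed
  qed (use w in simp)
  have "\<eta> (c1 \<cdot>\<^sub>v z + c2 \<cdot>\<^sub>v w) \<le> \<eta> (c1 \<cdot>\<^sub>v z) + \<eta> (c2 \<cdot>\<^sub>v w)"
    by (rule vn_tri[OF vn]) (use z w in auto)
  also have "\<dots> = cmod c1 * \<eta> z + cmod c2 * \<eta> z"
    using vn_smult[OF vn z] vn_smult[OF vn w] ew by simp
  also have "\<dots> = \<eta> z"
  proof -
    have "cmod c1 = (1 + t) / 2" "cmod c2 = (1 - t) / 2" unfolding c1_def c2_def norm_of_real using t by auto
    hence "cmod c1 + cmod c2 = 1" by simp
    thus ?thesis by (metis distrib_right mult_1)
  qed
  finally show ?thesis unfolding e .
qed

lemma avn_scale:
  assumes a: "is_absolute_vec_norm m \<eta>" and y: "y \<in> carrier_vec m"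
    and t: "\<And>i. 0 \<le> t i" "\<And>i. t i \<le> 1"
  shows "\<eta> (vec m (\<lambda>i. complex_of_real (t i) * y $ i)) \<le> \<eta> y"
proof -
  have "\<eta> (vec m (\<lambda>i. if i < k then complex_of_real (t i) * y $ i else y $ i)) \<le> \<eta> y" if "k \<le> m" for k
    using that
  proof (induction k)
    case 0
    have "vec m (\<lambda>i. if i < 0 then complex_of_real (t i) * y $ i else y $ i) = y"
      using y by (intro eq_vecI) auto
    then show ?case by simp
  next
    case (Suc k)
    define z where "z = vec m (\<lambda>i. if i < k then complex_of_real (t i) * y $ i else y $ i)"
    have "vec m (\<lambda>i. if i < Suc k then complex_of_real (t i) * y $ i else y $ i) =
          vec m (\<lambda>i. if i = k then complex_of_real (t k) * z $ i else z $ i)"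
      unfolding z_def using Suc.prems by (intro eq_vecI) (auto simp: less_Suc_eq)
    also have "\<eta> \<dots> \<le> \<eta> z" by (rule avn_scale1[OF a _ _ t]) (use Suc.prems z_def in auto)
    also have "\<dots> \<le> \<eta> y" unfolding z_def using Suc by simp
    finally show ?case .
  qed
  moreover have "vec m (\<lambda>i. if i < m then complex_of_real (t i) * y $ i else y $ i) = vec m (\<lambda>i. complex_of_real (t i) * y $ i)"
    by (intro eq_vecI) auto
  ultimately show ?thesis by (metis order_refl)
qed

lemma avn_mono:
  assumes a: "is_absolute_vec_norm m \<eta>" and x: "x \<in> carrier_vec m" and y: "y \<in> carrier_vec m"
    and le: "\<And>i. i < m \<Longrightarrow> cmod (x $ i) \<le> cmod (y $ i)"
  shows "\<eta> x \<le> \<eta> y"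
proof -
  define t where "t i = (if i < m \<and> cmod (y $ i) \<noteq> 0 then cmod (x $ i) / cmod (y $ i) else 0)" for i
  have t1: "0 \<le> t i" for i unfolding t_def by auto
  have t2: "t i \<le> 1" for i
  proof (cases "i < m \<and> cmod (y $ i) \<noteq> 0")
    case True thus ?thesis using le[of i] unfolding t_def by (simp add: divide_le_eq_1)
  qed (simp add: t_def)
  note t = t1 t2
  have "vec_abs x = vec m (\<lambda>i. complex_of_real (t i) * vec_abs y $ i)"
  proof (rule eq_vecI)
    fix i assume "i < dim_vec (vec m (\<lambda>i. complex_of_real (t i) * vec_abs y $ i))"
    hence i: "i < m" by simp
    show "vec_abs x $ i = vec m (\<lambda>i. complex_of_real (t i) * vec_abs y $ i) $ i"
    proof (cases "cmod (y $ i) = 0")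
      case True
      hence "cmod (x $ i) = 0" using le[OF i] by (smt (verit) norm_ge_zero)
      thus ?thesis using i x y True unfolding vec_abs_def t_def by simp
    next
      case False
      thus ?thesis using i x y unfolding vec_abs_def t_def by simp
    qed
  qed (use x in \<open>simp add: vec_abs_def\<close>)
  hence "\<eta> (vec_abs x) \<le> \<eta> (vec_abs y)" using avn_scale[OF a _ t] y by (simp add: vec_abs_def)
  thus ?thesis using avn_abs[OF a x] avn_abs[OF a y] by simp
qed

lemma avn_diag:
  assumes a: "is_absolute_vec_norm m \<eta>" and x: "x \<in> carrier_vec m"
    and P: "0 \<le> P" "\<And>i. i < m \<Longrightarrow> cmod (p i) \<le> P"
  shows "\<eta> (vec m (\<lambda>i. p i * x $ i)) \<le> P * \<eta> x"
proof -
  have "\<eta> (vec m (\<lambda>i. p i * x $ i)) \<le> \<eta> (complex_of_real P \<cdot>\<^sub>v x)"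
    using x P by (intro avn_mono[OF a]) (auto simp: norm_mult intro!: mult_right_mono)
  also have "\<dots> = P * \<eta> x" using vn_smult[OF avn_vn[OF a] x] P by simp
  finally show ?thesis .
qed

lemma mult_mat_vec_entry:
  fixes M :: "complex mat"
  assumes "M \<in> carrier_mat m m" "x \<in> carrier_vec m" "i < m"
  shows "(M *\<^sub>v x) $ i = (\<Sum>j<m. M $$ (i, j) * x $ j)"
  using assms by (simp add: scalar_prod_def lessThan_atLeast0)

lemma ind_bound:
  assumes vn: "is_vec_norm m \<eta>"
  shows "\<exists>K\<ge>0. \<forall>M\<in>carrier_mat m m. \<forall>x\<in>carrier_vec m.
           \<eta> (M *\<^sub>v x) \<le> K * (\<Sum>i<m. \<Sum>j<m. cmod (M $$ (i, j))) * \<eta> x"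
proof -
  obtain c where c: "c > 0" "\<And>x i. x \<in> carrier_vec m \<Longrightarrow> i < m \<Longrightarrow> cmod (x $ i) \<le> c * \<eta> x"
    using vn_lower[OF vn] by blast
  define E where "E = (\<Sum>i<m. \<eta> (unit_vec m i))"
  have Ei: "\<eta> (unit_vec m i) \<le> E" if "i < m" for i
    unfolding E_def using that vn_nonneg[OF vn]
    by (intro member_le_sum) auto
  have E0: "E \<ge> 0" unfolding E_def using vn_nonneg[OF vn] by (intro sum_nonneg) auto
  show ?thesis
  proof (intro exI[of _ "c * E"] conjI ballI)
    show "0 \<le> c * E" using c E0 by simp
    fix M :: "complex mat" and x :: "complex vec" assume M: "M \<in> carrier_mat m m" and x: "x \<in> carrier_vec m"
    have ex: "0 \<le> \<eta> x" using vn_nonneg[OF vn x] .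
    have "\<eta> (M *\<^sub>v x) \<le> (\<Sum>i<m. cmod ((M *\<^sub>v x) $ i) * \<eta> (unit_vec m i))"
      by (rule vn_upper[OF vn]) (use M x in auto)
    also have "\<dots> \<le> (\<Sum>i<m. (c * \<eta> x * (\<Sum>j<m. cmod (M $$ (i, j)))) * E)"
    proof (rule sum_mono)
      fix i assume i: "i \<in> {..<m}"
      have "cmod ((M *\<^sub>v x) $ i) = cmod (\<Sum>j<m. M $$ (i, j) * x $ j)"
        using mult_mat_vec_entry[OF M x] i by simp
      also have "\<dots> \<le> (\<Sum>j<m. cmod (M $$ (i, j) * x $ j))" by (rule norm_sum)
      also have "\<dots> \<le> (\<Sum>j<m. cmod (M $$ (i, j)) * (c * \<eta> x))"
        by (intro sum_mono) (use c(2)[OF x] in \<open>auto simp: norm_mult intro!: mult_left_mono\<close>)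
      also have "\<dots> = c * \<eta> x * (\<Sum>j<m. cmod (M $$ (i, j)))"
        by (simp add: sum_distrib_left mult.commute)
      finally have 1: "cmod ((M *\<^sub>v x) $ i) \<le> c * \<eta> x * (\<Sum>j<m. cmod (M $$ (i, j)))" .
      have 2: "\<eta> (unit_vec m i) \<le> E" using Ei i by simp
      show "cmod ((M *\<^sub>v x) $ i) * \<eta> (unit_vec m i) \<le> (c * \<eta> x * (\<Sum>j<m. cmod (M $$ (i, j)))) * E"
        using 1 2 by (intro mult_mono) (auto intro!: mult_nonneg_nonneg sum_nonneg ex c(1)[THEN less_imp_le] vn_nonneg[OF vn])
    qed
    also have "\<dots> = c * E * (\<Sum>i<m. \<Sum>j<m. cmod (M $$ (i, j))) * \<eta> x"
      by (simp add: sum_distrib_left sum_distrib_right mult_ac)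
    finally show "\<eta> (M *\<^sub>v x) \<le> c * E * (\<Sum>i<m. \<Sum>j<m. cmod (M $$ (i, j))) * \<eta> x" .
  qed
qed

lemma unit_exists:
  assumes vn: "is_vec_norm m \<eta>" and m: "0 < m"
  shows "\<exists>u\<in>carrier_vec m. \<eta> u = 1"
proof -
  have e: "unit_vec m 0 \<in> carrier_vec m" by simp
  have "unit_vec m 0 \<noteq> 0\<^sub>v m" using m by (metis index_unit_vec(1) index_zero_vec(1) zero_neq_one)
  hence p: "\<eta> (unit_vec m 0) \<noteq> 0" using vn_zero_iff[OF vn e] by simp
  have "\<eta> (complex_of_real (1 / \<eta> (unit_vec m 0)) \<cdot>\<^sub>v unit_vec m 0) = 1"
    using vn_smult[OF vn e] p vn_nonneg[OF vn e] by (simp add: norm_divide)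
  thus ?thesis by (intro bexI[of _ "complex_of_real (1 / \<eta> (unit_vec m 0)) \<cdot>\<^sub>v unit_vec m 0"]) auto
qed

lemma ind_bdd:
  assumes vn: "is_vec_norm m \<eta>" and M: "M \<in> carrier_mat m m"
  shows "bdd_above {\<eta> (M *\<^sub>v x) | x. x \<in> carrier_vec m \<and> \<eta> x = 1}"
proof -
  obtain K where K: "\<And>M x. M\<in>carrier_mat m m \<Longrightarrow> x\<in>carrier_vec m \<Longrightarrow>
           \<eta> (M *\<^sub>v x) \<le> K * (\<Sum>i<m. \<Sum>j<m. cmod (M $$ (i, j))) * \<eta> x"
    using ind_bound[OF vn] by blast
  show ?thesis
  proof (rule bdd_aboveI[of _ "K * (\<Sum>i<m. \<Sum>j<m. cmod (M $$ (i, j)))"])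
    fix y assume "y \<in> {\<eta> (M *\<^sub>v x) | x. x \<in> carrier_vec m \<and> \<eta> x = 1}"
    then obtain x where "x \<in> carrier_vec m" "\<eta> x = 1" "y = \<eta> (M *\<^sub>v x)" by blast
    thus "y \<le> K * (\<Sum>i<m. \<Sum>j<m. cmod (M $$ (i, j)))" using K[OF M, of x] by simp
  qed
qed

lemma ind_le:
  assumes vn: "is_vec_norm m \<eta>" and M: "M \<in> carrier_mat m m" and x: "x \<in> carrier_vec m"
  shows "\<eta> (M *\<^sub>v x) \<le> induced_norm m \<eta> M * \<eta> x"
proof (cases "x = 0\<^sub>v m")
  case True
  hence "M *\<^sub>v x = 0\<^sub>v m" using M by auto
  thus ?thesis using True vn_zero[OF vn] by simp
next
  case False
  hence p: "\<eta> x > 0" using vn_zero_iff[OF vn x] vn_nonneg[OF vn x] by simp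
  define u where "u = complex_of_real (1 / \<eta> x) \<cdot>\<^sub>v x"
  have u: "u \<in> carrier_vec m" "\<eta> u = 1" unfolding u_def using vn_smult[OF vn x] p x by (auto simp: norm_divide)
  have "\<eta> (M *\<^sub>v u) \<le> induced_norm m \<eta> M" unfolding induced_norm_def
    by (rule cSup_upper) (use u ind_bdd[OF vn M] in auto)
  moreover have "M *\<^sub>v u = complex_of_real (1 / \<eta> x) \<cdot>\<^sub>v (M *\<^sub>v x)" unfolding u_def
    using M x by (simp add: mult_mat_vec)
  hence "\<eta> (M *\<^sub>v u) = \<eta> (M *\<^sub>v x) / \<eta> x"
    using vn_smult[OF vn, of "M *\<^sub>v x"] M x p by (simp add: norm_divide)
  ultimately show ?thesis using p by (simp add: divide_le_eq)
qed

lemma ind_least: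
  assumes vn: "is_vec_norm m \<eta>" and m: "0 < m"
    and B: "\<And>x. x \<in> carrier_vec m \<Longrightarrow> \<eta> x = 1 \<Longrightarrow> \<eta> (M *\<^sub>v x) \<le> B"
  shows "induced_norm m \<eta> M \<le> B"
  unfolding induced_norm_def
  by (rule cSup_least) (use unit_exists[OF vn m] B in auto)

lemma ind_le_entries:
  assumes vn: "is_vec_norm m \<eta>" and m: "0 < m"
  shows "\<exists>K\<ge>0. \<forall>M\<in>carrier_mat m m. induced_norm m \<eta> M \<le> K * (\<Sum>i<m. \<Sum>j<m. cmod (M $$ (i, j)))"
proof -
  obtain K where K: "K \<ge> 0" "\<And>M x. M\<in>carrier_mat m m \<Longrightarrow> x\<in>carrier_vec m \<Longrightarrow>
           \<eta> (M *\<^sub>v x) \<le> K * (\<Sum>i<m. \<Sum>j<m. cmod (M $$ (i, j))) * \<eta> x"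
    using ind_bound[OF vn] by blast
  show ?thesis
    by (intro exI[of _ K] conjI ballI K(1) ind_least[OF vn m]) (use K(2) in force)
qed

lemma ind_diag:
  assumes a: "is_absolute_vec_norm m \<eta>" and m: "0 < m" and M: "M \<in> carrier_mat m m"
    and P: "0 \<le> P" "\<And>i. i < m \<Longrightarrow> cmod (p i) \<le> P"
  shows "induced_norm m \<eta> (M * mat m m (\<lambda>(i, j). if i = j then p i else 0)) \<le> induced_norm m \<eta> M * P"
proof (rule ind_least[OF avn_vn[OF a] m])
  have vn: "is_vec_norm m \<eta>" using a by (rule avn_vn)
  fix x :: "complex vec" assume x: "x \<in> carrier_vec m" and x1: "\<eta> x = 1"
  define D where "D = mat m m (\<lambda>(i, j). if i = j then p i else 0)"
  have D: "D \<in> carrier_mat m m" unfolding D_def by simp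
  have Dx: "D *\<^sub>v x = vec m (\<lambda>i. p i * x $ i)"
  proof (rule eq_vecI)
    fix i assume "i < dim_vec (vec m (\<lambda>i. p i * x $ i))"
    hence i: "i < m" by simp
    have "(D *\<^sub>v x) $ i = (\<Sum>j<m. D $$ (i, j) * x $ j)" by (rule mult_mat_vec_entry[OF D x i])
    also have "\<dots> = (\<Sum>j\<in>{i}. D $$ (i, j) * x $ j)"
      by (rule sum.mono_neutral_right) (use i in \<open>auto simp: D_def\<close>)
    also have "\<dots> = p i * x $ i" using i by (simp add: D_def)
    finally show "(D *\<^sub>v x) $ i = vec m (\<lambda>i. p i * x $ i) $ i" using i by simp
  qed (use D in simp)
  have "(M * D) *\<^sub>v x = M *\<^sub>v (D *\<^sub>v x)" using M D x by (simp add: assoc_mult_mat_vec)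
  hence "\<eta> ((M * D) *\<^sub>v x) \<le> induced_norm m \<eta> M * \<eta> (D *\<^sub>v x)"
    using ind_le[OF vn M, of "D *\<^sub>v x"] D x by simp
  also have "\<dots> \<le> induced_norm m \<eta> M * P"
  proof (rule mult_left_mono)
    show "\<eta> (D *\<^sub>v x) \<le> P" using avn_diag[OF a x P] x1 unfolding Dx by simp
    show "0 \<le> induced_norm m \<eta> M"
    proof -
      obtain u where u: "u \<in> carrier_vec m" "\<eta> u = 1" using unit_exists[OF vn m] by blast
      have "0 \<le> \<eta> (M *\<^sub>v u)" using vn_nonneg[OF vn] M u by simp
      also have "\<dots> \<le> induced_norm m \<eta> M" using ind_le[OF vn M u(1)] u(2) by simp
      finally show ?thesis .
    qed
  qed
  finally show "\<eta> ((M * mat m m (\<lambda>(i, j). if i = j then p i else 0)) *\<^sub>v x) \<le> induced_norm m \<eta> M * P"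
    unfolding D_def .
qed

lemma pick_bij:
  assumes "finite J"
  shows "bij_betw (pick J) {..<card J} J"
proof -
  have inj: "inj_on (pick J) {..<card J}"
  proof (rule inj_onI)
    fix a b assume a: "a \<in> {..<card J}" and b: "b \<in> {..<card J}" and e: "pick J a = pick J b"
    show "a = b"
    proof (rule ccontr)
      assume "a \<noteq> b"
      hence "a < b \<or> b < a" by arith
      thus False using pick_mono_le[of b J a] pick_mono_le[of a J b] a b e by auto
    qed
  qed
  have sub: "pick J ` {..<card J} \<subseteq> J" using pick_in_set_le by auto
  have "card (pick J ` {..<card J}) = card J" using card_image[OF inj] by simp
  hence "pick J ` {..<card J} = J" using card_subset_eq[OF assms sub] by simp
  thus ?thesis using inj unfolding bij_betw_def by simp
qed

lemma card_sub_lt: "I \<subseteq> {..<n} \<Longrightarrow> card {i. i < n \<and> i \<in> I} = card I"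
  by (metis (no_types, lifting) Collect_cong Collect_mem_eq lessThan_iff subset_iff)

lemma det_diag_mat:
  "det (mat k k (\<lambda>(a, b). if a = b then q a else 0)) = (\<Prod>a<k. q a)"
proof -
  have "det (mat k k (\<lambda>(a, b). if a = b then q a else 0)) = prod_list (diag_mat (mat k k (\<lambda>(a, b). if a = b then q a else 0)))"
    by (rule det_upper_triangular[of _ k]) (auto simp: upper_triangular_def)
  also have "\<dots> = (\<Prod>a<k. q a)" unfolding prod_list_diag_prod by (simp add: atLeast0LessThan)
  finally show ?thesis .
qed

lemma det_sub_scale:
  fixes A B :: "complex mat"
  assumes A: "A \<in> carrier_mat n n" and B: "B \<in> carrier_mat n n"
    and AB: "\<And>r c. r < n \<Longrightarrow> c < n \<Longrightarrow> A $$ (r, c) = B $$ (r, c) * d c"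
    and I: "I \<subseteq> {..<n}" and J: "J \<subseteq> {..<n}" and IJ: "card I = card J"
  shows "det (submatrix A I J) = det (submatrix B I J) * (\<Prod>l\<in>J. d l)"
proof -
  define k where "k = card J"
  have fJ: "finite J" using J finite_subset by blast
  have fI: "finite I" using I finite_subset by blast
  define D where "D = mat k k (\<lambda>(a, b). if a = b then d (pick J a) else 0)"
  have dimA: "dim_row (submatrix A I J) = k" "dim_col (submatrix A I J) = k"
    using A card_sub_lt[OF I] card_sub_lt[OF J] IJ by (auto simp: dim_submatrix k_def)
  have dimB: "dim_row (submatrix B I J) = k" "dim_col (submatrix B I J) = k"
    using B card_sub_lt[OF I] card_sub_lt[OF J] IJ by (auto simp: dim_submatrix k_def)
  have sB: "submatrix B I J \<in> carrier_mat k k" using dimB by auto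
  have D: "D \<in> carrier_mat k k" unfolding D_def by simp
  have eq: "submatrix A I J = submatrix B I J * D"
  proof (rule eq_matI)
    fix a b assume a: "a < dim_row (submatrix B I J * D)" and b: "b < dim_col (submatrix B I J * D)"
    hence a': "a < k" and b': "b < k" using dimB D by auto
    have pa: "pick I a \<in> I" using pick_in_set_le a' IJ k_def by metis
    have pb: "pick J b \<in> J" using pick_in_set_le b' k_def by metis
    have "(submatrix B I J * D) $$ (a, b) = (\<Sum>c\<in>{0..<k}. submatrix B I J $$ (a, c) * D $$ (c, b))"
      using a' b' sB D by (simp add: scalar_prod_def)
    also have "\<dots> = (\<Sum>c\<in>{b}. submatrix B I J $$ (a, c) * D $$ (c, b))"
      by (rule sum.mono_neutral_right) (use b' in \<open>auto simp: D_def\<close>)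
    also have "\<dots> = submatrix B I J $$ (a, b) * d (pick J b)" using b' by (simp add: D_def)
    also have "\<dots> = B $$ (pick I a, pick J b) * d (pick J b)"
      using a' b' dimB B by (subst submatrix_index) (auto simp: dim_submatrix)
    also have "\<dots> = A $$ (pick I a, pick J b)"
    proof -
      have "pick I a < n" "pick J b < n" using pa pb I J by auto
      from AB[OF this] show ?thesis by simp
    qed
    also have "\<dots> = submatrix A I J $$ (a, b)"
      using a' b' dimA A by (subst submatrix_index) (auto simp: dim_submatrix)
    finally show "submatrix A I J $$ (a, b) = (submatrix B I J * D) $$ (a, b)" by simp
  qed (use dimA dimB D in auto)
  have "det (submatrix A I J) = det (submatrix B I J) * det D"
    unfolding eq by (rule det_mult[OF sB D])
  also have "det D = (\<Prod>a<k. d (pick J a))" unfolding D_def by (rule det_diag_mat)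
  also have "\<dots> = (\<Prod>l\<in>J. d l)"
    using prod.reindex_bij_betw[OF pick_bij[OF fJ], of d] unfolding k_def by simp
  finally show ?thesis .
qed

lemma ksubsets_props:
  shows "length (ksubsets n k) = n choose k"
    and "j < length (ksubsets n k) \<Longrightarrow> ksubsets n k ! j \<subseteq> {..<n} \<and> card (ksubsets n k ! j) = k"
proof -
  define F where "F = {S. S \<subseteq> {..<n} \<and> card S = k}"
  have fF: "finite F" unfolding F_def by (rule finite_subset[of _ "Pow {..<n}"]) auto
  have cF: "card F = n choose k" unfolding F_def using n_subsets[of "{..<n}" k] by simp
  have fin: "\<And>S. S \<in> F \<Longrightarrow> finite S" unfolding F_def using finite_subset by blast
  have inj: "inj_on sorted_list_of_set F"
    by (rule inj_onI) (metis fin sorted_list_of_set.set_sorted_key_list_of_set)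
  have L: "ksubsets n k = map set (sorted_list_of_set (sorted_list_of_set ` F))"
    unfolding ksubsets_def F_def by simp
  show "length (ksubsets n k) = n choose k"
    unfolding L using card_image[OF inj] cF fF by simp
  assume j: "j < length (ksubsets n k)"
  have "sorted_list_of_set (sorted_list_of_set ` F) ! j \<in> set (sorted_list_of_set (sorted_list_of_set ` F))"
    using j unfolding L by simp
  hence "sorted_list_of_set (sorted_list_of_set ` F) ! j \<in> sorted_list_of_set ` F"
    using fF by simp
  then obtain S where S: "S \<in> F" "sorted_list_of_set (sorted_list_of_set ` F) ! j = sorted_list_of_set S" by blast
  have "ksubsets n k ! j = S" unfolding L using j S fin[OF S(1)] unfolding L by simp
  thus "ksubsets n k ! j \<subseteq> {..<n} \<and> card (ksubsets n k ! j) = k" using S(1) unfolding F_def by simp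
qed

lemma compound_carrier: "A \<in> carrier_mat n n \<Longrightarrow> compound k A \<in> carrier_mat (n choose k) (n choose k)"
  unfolding compound_def by (simp add: Let_def)

lemma compound_index: "A \<in> carrier_mat n n \<Longrightarrow> i < n choose k \<Longrightarrow> j < n choose k \<Longrightarrow>
   compound k A $$ (i, j) = det (submatrix A (ksubsets n k ! i) (ksubsets n k ! j))"
  unfolding compound_def by (simp add: Let_def)

lemma compound_factor:
  fixes A B :: "complex mat" and d :: "nat \<Rightarrow> real"
  assumes A: "A \<in> carrier_mat n n" and B: "B \<in> carrier_mat n n"
    and AB: "\<And>r c. r < n \<Longrightarrow> c < n \<Longrightarrow> A $$ (r, c) = B $$ (r, c) * complex_of_real (d c)"
  shows "compound k A = compound k B * mat (n choose k) (n choose k)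
            (\<lambda>(i, j). if i = j then complex_of_real (\<Prod>l\<in>ksubsets n k ! j. d l) else 0)"
    (is "_ = _ * ?D")
proof (rule eq_matI)
  let ?m = "n choose k"
  have CB: "compound k B \<in> carrier_mat ?m ?m" by (rule compound_carrier[OF B])
  have D: "?D \<in> carrier_mat ?m ?m" by simp
  fix i j assume "i < dim_row (compound k B * ?D)" "j < dim_col (compound k B * ?D)"
  hence i: "i < ?m" and j: "j < ?m" using CB D by auto
  have Li: "ksubsets n k ! i \<subseteq> {..<n}" "card (ksubsets n k ! i) = k"
    using ksubsets_props(2)[of i n k] ksubsets_props(1)[of n k] i by auto
  have Lj: "ksubsets n k ! j \<subseteq> {..<n}" "card (ksubsets n k ! j) = k"
    using ksubsets_props(2)[of j n k] ksubsets_props(1)[of n k] j by auto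
  have "(compound k B * ?D) $$ (i, j) = (\<Sum>c\<in>{0..<?m}. compound k B $$ (i, c) * ?D $$ (c, j))"
    using i j CB D by (simp add: scalar_prod_def)
  also have "\<dots> = (\<Sum>c\<in>{j}. compound k B $$ (i, c) * ?D $$ (c, j))"
    by (rule sum.mono_neutral_right) (use j in auto)
  also have "\<dots> = compound k B $$ (i, j) * complex_of_real (\<Prod>l\<in>ksubsets n k ! j. d l)" using j by simp
  also have "\<dots> = det (submatrix B (ksubsets n k ! i) (ksubsets n k ! j)) * (\<Prod>l\<in>ksubsets n k ! j. complex_of_real (d l))"
    using compound_index[OF B i j] by simp
  also have "\<dots> = det (submatrix A (ksubsets n k ! i) (ksubsets n k ! j))"
    by (rule det_sub_scale[OF A B AB Li(1) Lj(1), symmetric]) (use Li Lj in auto)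
  also have "\<dots> = compound k A $$ (i, j)" using compound_index[OF A i j] by simp
  finally show "compound k A $$ (i, j) = (compound k B * ?D) $$ (i, j)" by simp
qed (use compound_carrier[OF A, of k] compound_carrier[OF B, of k] in auto)

lemma sign_cmod: "cmod (of_int (sign p) :: complex) = 1"
  by (cases "evenperm p") (simp_all add: sign_def)
lemma w1: "p permutes {0..<d} \<Longrightarrow> i \<in> {0..<d} \<Longrightarrow> p i \<in> {0..<(d::nat)}"
  by (simp add: permutes_in_image)
lemma w2:
  fixes S :: "complex mat"
  assumes b: "\<And>a c. a < d \<Longrightarrow> c < d \<Longrightarrow> cmod (S $$ (a, c)) \<le> b0"
    and p: "p permutes {0..<d}"
  shows "(\<Prod>i = 0..<d. cmod (S $$ (i, p i))) \<le> (\<Prod>i = 0..<d. b0)"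
proof (rule prod_mono)
  fix i assume i: "i \<in> {0..<d}"
  have "p i \<in> {0..<d}" using w1[OF p i] .
  hence "cmod (S $$ (i, p i)) \<le> b0" using b i by simp
  thus "0 \<le> cmod (S $$ (i, p i)) \<and> cmod (S $$ (i, p i)) \<le> b0" by simp
qed
lemma w3: "cmod (of_int (sign p) * (x::complex)) = cmod x"
  unfolding norm_mult sign_cmod by simp

lemma perm_term_bound:
  fixes S :: "complex mat"
  assumes b: "\<And>a c. a < d \<Longrightarrow> c < d \<Longrightarrow> cmod (S $$ (a, c)) \<le> b0"
    and p: "p permutes {0..<d}"
  shows "cmod (of_int (sign p) * (\<Prod>i = 0..<d. S $$ (i, p i))) \<le> b0 ^ d"
proof -
  have "cmod (of_int (sign p) * (\<Prod>i = 0..<d. S $$ (i, p i))) = cmod (\<Prod>i = 0..<d. S $$ (i, p i))"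
    by (rule w3)
  also have "\<dots> \<le> (\<Prod>i = 0..<d. cmod (S $$ (i, p i)))" by (rule norm_prod_le)
  also have "\<dots> \<le> (\<Prod>i = 0..<d. b0)" by (rule w2[OF b p])
  also have "\<dots> = b0 ^ d" by (simp only: prod_constant card_atLeastLessThan diff_zero)
  finally show ?thesis .
qed

lemma det_bound:
  fixes S :: "complex mat"
  assumes S: "S \<in> carrier_mat d d" and b: "\<And>a c. a < d \<Longrightarrow> c < d \<Longrightarrow> cmod (S $$ (a, c)) \<le> b0"
  shows "cmod (det S) \<le> fact d * b0 ^ d"
proof -
  have e: "det S = (\<Sum>p\<in>{p. p permutes {0..<d}}. of_int (sign p) * (\<Prod>i = 0..<d. S $$ (i, p i)))"
    by (rule det_def'[OF S])
  have "cmod (det S) \<le> (\<Sum>p\<in>{p. p permutes {0..<d}}. cmod (of_int (sign p) * (\<Prod>i = 0..<d. S $$ (i, p i))))"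
    unfolding e by (rule norm_sum)
  also have "\<dots> \<le> (\<Sum>p\<in>{p. p permutes {0..<d}}. b0 ^ d)"
  proof (rule sum_mono)
    fix p assume "p \<in> {p. p permutes {0..<d}}"
    hence p: "p permutes {0..<d}" by simp
    show "cmod (of_int (sign p) * (\<Prod>i = 0..<d. S $$ (i, p i))) \<le> b0 ^ d"
      by (rule perm_term_bound[OF b p])
  qed
  also have "\<dots> = of_nat (card {p. p permutes {0..<d}}) * b0 ^ d" by (simp only: sum_constant)
  also have "card {p. p permutes {0..<d}} = fact d" by (rule card_permutations) auto
  finally show ?thesis by simp
qed

lemma sub_entry_bound:
  fixes B :: "complex mat"
  assumes B: "B \<in> carrier_mat n n" and b: "\<And>r c. r < n \<Longrightarrow> c < n \<Longrightarrow> cmod (B $$ (r, c)) \<le> b0"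
    and I: "I \<subseteq> {..<n}" and J: "J \<subseteq> {..<n}"
    and a: "a < card I" and c: "c < card J"
  shows "cmod (submatrix B I J $$ (a, c)) \<le> b0"
proof -
  have pa: "pick I a \<in> I" using pick_in_set_le[OF a] .
  have pc: "pick J c \<in> J" using pick_in_set_le[OF c] .
  have "submatrix B I J $$ (a, c) = B $$ (pick I a, pick J c)"
    by (rule submatrix_index) (use a c B card_sub_lt[OF I] card_sub_lt[OF J] in auto)
  moreover have "pick I a < n" "pick J c < n" using pa pc I J by auto
  ultimately show ?thesis using b by simp
qed

lemma theta_bdd:
  assumes k: "k \<le> n" and vn: "is_vec_norm n \<nu>"
    and eta: "is_absolute_vec_norm (n choose k) \<eta>"
    and mu: "\<And>M. M \<in> carrier_mat (n choose k) (n choose k) \<Longrightarrow> \<mu> M = induced_norm (n choose k) \<eta> M"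
  shows "bdd_above {\<mu> (compound k B) | B. B \<in> carrier_mat n n \<and> (\<forall>i < n. \<nu> (col B i) = 1)}"
proof -
  let ?m = "n choose k"
  have m: "0 < ?m" using k by simp
  obtain K where K: "K \<ge> 0" "\<And>M. M\<in>carrier_mat ?m ?m \<Longrightarrow> induced_norm ?m \<eta> M \<le> K * (\<Sum>i<?m. \<Sum>j<?m. cmod (M $$ (i, j)))"
    using ind_le_entries[OF avn_vn[OF eta] m] by blast
  obtain c where c: "c > 0" "\<And>x i. x \<in> carrier_vec n \<Longrightarrow> i < n \<Longrightarrow> cmod (x $ i) \<le> c * \<nu> x"
    using vn_lower[OF vn] by blast
  define Db where "Db = fact k * c ^ k"
  show ?thesis
  proof (rule bdd_aboveI[of _ "K * (\<Sum>i<?m. \<Sum>j<?m. Db)"])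
    fix y assume "y \<in> {\<mu> (compound k B) | B. B \<in> carrier_mat n n \<and> (\<forall>i < n. \<nu> (col B i) = 1)}"
    then obtain B where B: "B \<in> carrier_mat n n" "\<And>i. i < n \<Longrightarrow> \<nu> (col B i) = 1" and y: "y = \<mu> (compound k B)"
      by blast
    have CB: "compound k B \<in> carrier_mat ?m ?m" by (rule compound_carrier[OF B(1)])
    have Bb: "cmod (B $$ (r, s)) \<le> c" if "r < n" "s < n" for r s
    proof -
      have "cmod (col B s $ r) \<le> c * \<nu> (col B s)" by (rule c(2)) (use B(1) that in auto)
      thus ?thesis using B that by simp
    qed
    have Cb: "cmod (compound k B $$ (i, j)) \<le> Db" if i: "i < ?m" and j: "j < ?m" for i j
    proof -
      have Li: "ksubsets n k ! i \<subseteq> {..<n}" "card (ksubsets n k ! i) = k"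
        using ksubsets_props(2)[of i n k] ksubsets_props(1)[of n k] i by auto
      have Lj: "ksubsets n k ! j \<subseteq> {..<n}" "card (ksubsets n k ! j) = k"
        using ksubsets_props(2)[of j n k] ksubsets_props(1)[of n k] j by auto
      have S: "submatrix B (ksubsets n k ! i) (ksubsets n k ! j) \<in> carrier_mat k k"
        using B(1) card_sub_lt[OF Li(1)] card_sub_lt[OF Lj(1)] Li Lj by (auto simp: dim_submatrix)
      have "cmod (det (submatrix B (ksubsets n k ! i) (ksubsets n k ! j))) \<le> fact k * c ^ k"
        by (rule det_bound[OF S]) (rule sub_entry_bound[OF B(1) Bb Li(1) Lj(1)], use Li Lj in auto)
      thus ?thesis using compound_index[OF B(1) i j] unfolding Db_def by simp
    qed
    have "y = induced_norm ?m \<eta> (compound k B)" using y mu[OF CB] by simp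
    also have "\<dots> \<le> K * (\<Sum>i<?m. \<Sum>j<?m. cmod (compound k B $$ (i, j)))" by (rule K(2)[OF CB])
    also have "\<dots> \<le> K * (\<Sum>i<?m. \<Sum>j<?m. Db)"
      by (intro mult_left_mono sum_mono K(1)) (use Cb in auto)
    finally show "y \<le> K * (\<Sum>i<?m. \<Sum>j<?m. Db)" .
  qed
qed

theorem theorem2p1:
  fixes n k :: nat and \<nu> :: "complex vec \<Rightarrow> real" and \<mu> :: "complex mat \<Rightarrow> real"
    and A :: "complex mat"
  assumes "0 < k" and "k \<le> n"
    and "is_vec_norm n \<nu>"
    and "is_absolute_operator_norm (n choose k) \<mu>"
    and "A \<in> carrier_mat n n"
  shows "\<mu> (compound k A) \<le> theta n k \<mu> \<nu> *
           Max {\<Prod>i\<in>\<alpha>. \<nu> (col A i) | \<alpha>. \<alpha> \<subseteq> {..<n} \<and> card \<alpha> = k}"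
proof -
  note k = assms(1,2) and vn = assms(3) and A = assms(5)
  let ?m = "n choose k"
  obtain \<eta> where eta: "is_absolute_vec_norm ?m \<eta>"
    and mu: "\<And>M. M \<in> carrier_mat ?m ?m \<Longrightarrow> \<mu> M = induced_norm ?m \<eta> M"
    using assms(4) unfolding is_absolute_operator_norm_def by blast
  have m: "0 < ?m" using k by simp
  have n: "0 < n" using k by simp
  define d where "d c = \<nu> (col A c)" for c
  have d0: "d c \<ge> 0" if "c < n" for c unfolding d_def by (rule vn_nonneg[OF vn]) (use A that in auto)
  obtain u where u: "u \<in> carrier_vec n" "\<nu> u = 1" using unit_exists[OF vn n] by blast
  define B where "B = mat n n (\<lambda>(r, c). if d c = 0 then u $ r else A $$ (r, c) / complex_of_real (d c))"
  have B: "B \<in> carrier_mat n n" unfolding B_def by simp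
  have colB: "\<nu> (col B c) = 1" if c: "c < n" for c
  proof (cases "d c = 0")
    case True
    have "col B c = u" unfolding B_def using c True u(1) by (intro eq_vecI) auto
    thus ?thesis using u by simp
  next
    case False
    have "col B c = complex_of_real (1 / d c) \<cdot>\<^sub>v col A c" unfolding B_def using c False A
      by (intro eq_vecI) (auto simp: divide_inverse mult.commute)
    hence "\<nu> (col B c) = (1 / d c) * \<nu> (col A c)" using vn_smult[OF vn, of "col A c"] A c d0[OF c]
      by (simp add: norm_divide)
    thus ?thesis using False unfolding d_def by simp
  qed
  have AB: "A $$ (r, c) = B $$ (r, c) * complex_of_real (d c)" if r: "r < n" and c: "c < n" for r c
  proof (cases "d c = 0")
    case True
    hence "col A c = 0\<^sub>v n" using vn_zero_iff[OF vn, of "col A c"] A c unfolding d_def by auto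
    hence "col A c $ r = 0" using r by simp
    thus ?thesis using A r c True by simp
  next
    case False
    thus ?thesis unfolding B_def using r c by simp
  qed
  define p where "p j = (\<Prod>l\<in>ksubsets n k ! j. d l)" for j
  define P where "P = Max {\<Prod>i\<in>\<alpha>. \<nu> (col A i) | \<alpha>. \<alpha> \<subseteq> {..<n} \<and> card \<alpha> = k}"
  have fin: "finite {\<Prod>i\<in>\<alpha>. \<nu> (col A i) | \<alpha>. \<alpha> \<subseteq> {..<n} \<and> card \<alpha> = k}"
  proof -
    have "{\<Prod>i\<in>\<alpha>. \<nu> (col A i) | \<alpha>. \<alpha> \<subseteq> {..<n} \<and> card \<alpha> = k} =
          (\<lambda>\<alpha>. \<Prod>i\<in>\<alpha>. \<nu> (col A i)) ` {\<alpha>. \<alpha> \<subseteq> {..<n} \<and> card \<alpha> = k}" by blast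
    moreover have "finite {\<alpha>. \<alpha> \<subseteq> {..<n} \<and> card \<alpha> = k}"
      by (rule finite_subset[of _ "Pow {..<n}"]) auto
    ultimately show ?thesis by simp
  qed
  have pP: "p j \<le> P" "0 \<le> p j" if j: "j < ?m" for j
  proof -
    have Lj: "ksubsets n k ! j \<subseteq> {..<n}" "card (ksubsets n k ! j) = k"
      using ksubsets_props(2)[of j n k] ksubsets_props(1)[of n k] j by auto
    have "p j \<in> {\<Prod>i\<in>\<alpha>. \<nu> (col A i) | \<alpha>. \<alpha> \<subseteq> {..<n} \<and> card \<alpha> = k}"
      unfolding p_def d_def using Lj by blast
    thus "p j \<le> P" unfolding P_def using fin by (rule Max_ge[rotated])
    show "0 \<le> p j" unfolding p_def using Lj d0 by (intro prod_nonneg) auto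
  qed
  have P0: "0 \<le> P" using pP[OF m] by linarith
  define D where "D = mat ?m ?m (\<lambda>(i, j). if i = j then complex_of_real (p i) else 0)"
  have D_eq: "D = mat ?m ?m (\<lambda>(i, j). if i = j then complex_of_real (\<Prod>l\<in>ksubsets n k ! j. d l) else 0)"
    unfolding D_def p_def by (intro eq_matI) auto
  have CA: "compound k A = compound k B * D"
    unfolding D_eq by (rule compound_factor[OF A B AB])
  have CB: "compound k B \<in> carrier_mat ?m ?m" by (rule compound_carrier[OF B])
  have CBD: "compound k B * D \<in> carrier_mat ?m ?m" using CB unfolding D_def by simp
  have "\<mu> (compound k A) = induced_norm ?m \<eta> (compound k B * D)" unfolding CA using mu[OF CBD] .
  also have "\<dots> \<le> induced_norm ?m \<eta> (compound k B) * P"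
    unfolding D_def by (rule ind_diag[OF eta m CB P0]) (use pP in auto)
  also have "induced_norm ?m \<eta> (compound k B) = \<mu> (compound k B)" using mu[OF CB] by simp
  also have "\<mu> (compound k B) * P \<le> theta n k \<mu> \<nu> * P"
  proof (rule mult_right_mono[OF _ P0])
    show "\<mu> (compound k B) \<le> theta n k \<mu> \<nu>" unfolding theta_def
      by (rule cSup_upper) (use B colB theta_bdd[OF k(2) vn eta mu] in auto)
  qed
  finally show ?thesis unfolding P_def .
qed

end
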